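(* Let $d\ge 2$ and $N\ge 2$ be integers, let $X=\{x^1,\dots,x^N\}\subseteq\mathbb{R}^d$, and let $C\subseteq\mathbb{R}^d$ be a proper closed convex cone. Then: (i) For every $w\in C^+\setminus\{0\}$, both $r_{X,w}$ and $r_{X,C}$ are ranking functions on $X$ with respect to $\leq_C$: for all $y,z\in X$, $y\leq_C z$ implies $r_{X,w}(y)\le r_{X,w}(z)$ and $r_{X,C}(y)\le r_{X,C}(z)$. Both are moreover strict: if $\operatorname{int} C\neq\varnothing$, then for all $y,z\in X$, $y<_C z$ implies $r_{X,w}(y)<r_{X,w}(z)$ and $r_{X,C}(y)<r_{X,C}(z)$. (ii) For every invertible matrix $A\in\mathbb{R}^{d\times d}$ and every $b\in\mathbb{R}^d$, $$\forall z\in\mathbb{R}^d:\quad r_{AX+b,\,AC}(Az+b)=r_{X,C}(z),$$ where $AX+b=\{Ax^1+b,\dots,Ax^N+b\}$ and $AC=\{Ac\mid c\in C\}$. (iii) If $D\subseteq\mathbb{R}^d$ is a closed convex cone with $C\subseteq D$, then $r_{X,C}(z)\le r_{X,D}(z)$ for all $z\in\mathbb{R}^d$. In particular, $r_{X,C}(z)\le r_{X,H^+(w)}(z)$ for all $w\in C^+$ and all $z\in\mathbb{R}^d$.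
   Context: A proper closed convex cone $C\subseteq\mathbb{R}^d$ is a closed set with $sC=C$ for all $s\ge 0$, $C+C=C$, and $C\notin\{\varnothing,\mathbb{R}^d\}$. It induces the preorder $y\leq_C z$ iff $z-y\in C$, and (when $\operatorname{int} C\neq\varnothing$) $y<_C z$ iff $z-y\in\operatorname{int} C$. The dual cone of a cone $K$ is $K^+=\{v\in\mathbb{R}^d\mid \forall z\in K: v^\top z\ge 0\}$. For $w\in\mathbb{R}^d$, $H^+(w)=\{z\in\mathbb{R}^d\mid w^\top z\ge 0\}$ (so $H^+(0)=\mathbb{R}^d$). For a finite set $X\subseteq\mathbb{R}^d$, a nonzero $w$, and a closed convex cone $K$, define for $z\in\mathbb{R}^d$ $$r_{X,w}(z)=\#\{x\in X\mid x\in z-H^+(w)\}=\#\{x\in X\mid w^\top x\le w^\top z\},\qquad r_{X,K}(z)=\min_{w\in K^+}\#\{x\in X\mid x\in z-H^+(w)\},$$ where $\#$ denotes cardinality. A ranking function on $X$ with respect to $\leq_C$ is a map $r:X\to\mathbb{R}$ with $y\leq_C z\Rightarrow r(y)\le r(z)$ for $y,z\in X$; it is strict if $y<_C z\Rightarrow r(y)<r(z)$. *)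

theory Defs
  imports "HOL-Analysis.Analysis"
begin

definition proper_closed_convex_cone :: "('a::euclidean_space) set \<Rightarrow> bool" where
  "proper_closed_convex_cone C \<longleftrightarrow> closed C \<and> convex_cone C \<and> C \<noteq> {} \<and> C \<noteq> UNIV"

definition closed_convex_cone :: "('a::euclidean_space) set \<Rightarrow> bool" where
  "closed_convex_cone C \<longleftrightarrow> closed C \<and> convex_cone C \<and> C \<noteq> {}"

definition dual_cone :: "('a::euclidean_space) set \<Rightarrow> 'a set" where
  "dual_cone K = {v. \<forall>z\<in>K. v \<bullet> z \<ge> 0}"

definition halfspace_plus :: "'a::euclidean_space \<Rightarrow> 'a set" where
  "halfspace_plus w = {z. w \<bullet> z \<ge> 0}"

definition rank_w :: "'a::euclidean_space set \<Rightarrow> 'a \<Rightarrow> 'a \<Rightarrow> nat" where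
  "rank_w X w z = card {x\<in>X. w \<bullet> x \<le> w \<bullet> z}"

definition rank_K :: "'a::euclidean_space set \<Rightarrow> 'a set \<Rightarrow> 'a \<Rightarrow> nat" where
  "rank_K X K z = Min ((\<lambda>w. rank_w X w z) ` dual_cone K)"

definition ranking_function :: "'a::euclidean_space set \<Rightarrow> 'a set \<Rightarrow> ('a \<Rightarrow> real) \<Rightarrow> bool" where
  "ranking_function X C r \<longleftrightarrow> (\<forall>y\<in>X. \<forall>z\<in>X. z - y \<in> C \<longrightarrow> r y \<le> r z)"

definition strict_ranking_function :: "'a::euclidean_space set \<Rightarrow> 'a set \<Rightarrow> ('a \<Rightarrow> real) \<Rightarrow> bool" where
  "strict_ranking_function X C r \<longleftrightarrow> (\<forall>y\<in>X. \<forall>z\<in>X. z - y \<in> interior C \<longrightarrow> r y < r z)"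

end

theory Submission
  imports Defs
begin

lemma zero_in_dual: "0 \<in> dual_cone K"
  by (simp add: dual_cone_def)

lemma rank_w_le: "finite X \<Longrightarrow> rank_w X w z \<le> card X"
  unfolding rank_w_def by (intro card_mono) auto

lemma fin_img: "finite X \<Longrightarrow> finite ((\<lambda>w. rank_w X w z) ` S)"
  by (rule finite_subset[of _ "{..card X}"]) (auto simp: rank_w_le)

lemma rank_K_le: "finite X \<Longrightarrow> w \<in> dual_cone K \<Longrightarrow> rank_K X K z \<le> rank_w X w z"
  unfolding rank_K_def by (intro Min_le fin_img) auto

lemma rank_K_in: "finite X \<Longrightarrow> \<exists>w\<in>dual_cone K. rank_K X K z = rank_w X w z"
proof -
  assume f: "finite X"
  have "rank_K X K z \<in> (\<lambda>w. rank_w X w z) ` dual_cone K"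
    unfolding rank_K_def using zero_in_dual[of K] by (intro Min_in fin_img f) auto
  then show ?thesis by auto
qed

lemma rank_K_anti: "finite X \<Longrightarrow> dual_cone D \<subseteq> dual_cone C \<Longrightarrow> rank_K X C z \<le> rank_K X D z"
proof -
  assume f: "finite X" and s: "dual_cone D \<subseteq> dual_cone C"
  obtain v where v: "v \<in> dual_cone D" "rank_K X D z = rank_w X v z" using rank_K_in[OF f] by blast
  have "v \<in> dual_cone C" using v s by auto
  from rank_K_le[OF f this] v show ?thesis by simp
qed

lemma rank_w_mono: "finite X \<Longrightarrow> w \<bullet> y \<le> w \<bullet> z \<Longrightarrow> rank_w X w y \<le> rank_w X w z"
  unfolding rank_w_def by (intro card_mono) auto

lemma rank_w_strict: "finite X \<Longrightarrow> z \<in> X \<Longrightarrow> w \<bullet> y < w \<bullet> z \<Longrightarrow> rank_w X w y < rank_w X w z"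
  unfolding rank_w_def by (intro psubset_card_mono) force+

lemma affine_part:
  fixes X C :: "(real ^ 'd) set" and A :: "real ^ 'd ^ 'd"
  assumes f: "finite X" and inv: "invertible A"
  shows "rank_K ((\<lambda>x. A *v x + b) ` X) ((\<lambda>c. A *v c) ` C) (A *v z + b) = rank_K X C z"
proof -
  obtain B where AB: "A ** B = mat 1" "B ** A = mat 1" using inv invertible_def by blast
  define g where "g = (\<lambda>x. A *v x + b)"
  have ginj: "inj g"
  proof (rule injI)
    fix x y assume "g x = g y"
    then have "A *v x = A *v y" by (simp add: g_def)
    then have "B *v (A *v x) = B *v (A *v y)" by simp
    then show "x = y" by (simp add: matrix_vector_mul_assoc AB)
  qed
  have r: "rank_w (g ` X) v (g z) = rank_w X (v v* A) z" for v
  proof -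
    have "{x'\<in>g ` X. v \<bullet> x' \<le> v \<bullet> g z} = g ` {x\<in>X. (v v* A) \<bullet> x \<le> (v v* A) \<bullet> z}"
      by (auto simp: g_def dot_lmul_matrix inner_add_right)
    then show ?thesis unfolding rank_w_def
      by (simp add: card_image inj_on_subset[OF ginj])
  qed
  have d: "dual_cone ((\<lambda>c. A *v c) ` C) = {v. v v* A \<in> dual_cone C}"
    by (auto simp: dual_cone_def dot_lmul_matrix)
  have s: "(\<lambda>v. v v* A) ` {v. v v* A \<in> dual_cone C} = dual_cone C"
  proof
    show "dual_cone C \<subseteq> (\<lambda>v. v v* A) ` {v. v v* A \<in> dual_cone C}"
    proof
      fix u assume u: "u \<in> dual_cone C"
      have "(u v* B) v* A = u" by (simp add: vector_matrix_mul_assoc AB)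
      then show "u \<in> (\<lambda>v. v v* A) ` {v. v v* A \<in> dual_cone C}"
        using u by (metis (mono_tags, lifting) image_eqI mem_Collect_eq)
    qed
  qed auto
  have "(\<lambda>w. rank_w (g ` X) w (g z)) ` dual_cone ((\<lambda>c. A *v c) ` C)
        = (\<lambda>u. rank_w X u z) ` ((\<lambda>v. v v* A) ` {v. v v* A \<in> dual_cone C})"
    unfolding d r by (simp add: image_image)
  then show ?thesis unfolding rank_K_def s g_def by simp
qed

theorem proposition2p2:
  fixes X C :: "(real ^ 'd) set"
  assumes "CARD('d) \<ge> 2"
    and "finite X" and "card X \<ge> 2"
    and "proper_closed_convex_cone C"
  shows "(\<forall>w \<in> dual_cone C - {0}.
            ranking_function X C (\<lambda>z. real (rank_w X w z))
          \<and> ranking_function X C (\<lambda>z. real (rank_K X C z))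
          \<and> (interior C \<noteq> {} \<longrightarrow>
                strict_ranking_function X C (\<lambda>z. real (rank_w X w z))
              \<and> strict_ranking_function X C (\<lambda>z. real (rank_K X C z))))
       \<and> (\<forall>(A :: real ^ 'd ^ 'd) (b :: real ^ 'd). invertible A \<longrightarrow>
            (\<forall>z. rank_K ((\<lambda>x. A *v x + b) ` X) ((\<lambda>c. A *v c) ` C) (A *v z + b)
                 = rank_K X C z))
       \<and> (\<forall>D :: (real ^ 'd) set. closed_convex_cone D \<and> C \<subseteq> D \<longrightarrow>
            (\<forall>z. rank_K X C z \<le> rank_K X D z))
       \<and> (\<forall>w \<in> dual_cone C. \<forall>z. rank_K X C z \<le> rank_K X (halfspace_plus w) z)"
proof (intro conjI ballI allI impI)
  note f = assms(2)
  have wle: "w \<bullet> y \<le> w \<bullet> z" if "w \<in> dual_cone C" "z - y \<in> C" for w y z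
    using that by (auto simp: dual_cone_def inner_diff_right)
  have wlt: "w \<bullet> y < w \<bullet> z" if w: "w \<in> dual_cone C" "w \<noteq> 0" and i: "z - y \<in> interior C" for w y z
  proof -
    obtain e where e0: "e > 0" and eb: "ball (z - y) e \<subseteq> interior C"
      using i open_contains_ball[of "interior C"] open_interior by blast
    have e: "e > 0" "ball (z - y) e \<subseteq> C" using e0 eb interior_subset by blast+
    define u where "u = (z - y) - (e / 2 / norm w) *\<^sub>R w"
    have "dist (z - y) u < e" using e w by (simp add: u_def dist_norm)
    then have "u \<in> C" using e by auto
    then have "0 \<le> w \<bullet> u" using w by (auto simp: dual_cone_def)
    also have "w \<bullet> u = w \<bullet> (z - y) - e / 2 * norm w"
      using w by (simp add: u_def inner_diff_right power2_norm_eq_inner[symmetric] power2_eq_square)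
    finally have "w \<bullet> (z - y) > 0" using e w by (smt (verit) mult_pos_pos zero_less_norm_iff half_gt_zero)
    then show ?thesis by (simp add: inner_diff_right)
  qed
  fix w assume w: "w \<in> dual_cone C - {0}"
  show "ranking_function X C (\<lambda>z. real (rank_w X w z))"
    unfolding ranking_function_def using w wle f by (auto intro: rank_w_mono)
  show "ranking_function X C (\<lambda>z. real (rank_K X C z))"
    unfolding ranking_function_def
  proof (intro ballI impI)
    fix y z assume "y \<in> X" "z \<in> X" "z - y \<in> C"
    obtain v where v: "v \<in> dual_cone C" "rank_K X C z = rank_w X v z" using rank_K_in[OF f] by blast
    have "rank_K X C y \<le> rank_w X v y" using rank_K_le[OF f v(1)] .
    also have "\<dots> \<le> rank_w X v z" using rank_w_mono[OF f wle[OF v(1) \<open>z - y \<in> C\<close>]] .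
    finally show "real (rank_K X C y) \<le> real (rank_K X C z)" using v by simp
  qed
  assume "interior C \<noteq> {}"
  show "strict_ranking_function X C (\<lambda>z. real (rank_w X w z))"
    unfolding strict_ranking_function_def using w wlt f by (auto intro: rank_w_strict)
  show "strict_ranking_function X C (\<lambda>z. real (rank_K X C z))"
    unfolding strict_ranking_function_def
  proof (intro ballI impI)
    fix y z assume yz: "y \<in> X" "z \<in> X" "z - y \<in> interior C"
    obtain v where v: "v \<in> dual_cone C" "rank_K X C z = rank_w X v z" using rank_K_in[OF f] by blast
    show "real (rank_K X C y) < real (rank_K X C z)"
    proof (cases "v = 0")
      case False
      have "rank_K X C y \<le> rank_w X v y" using rank_K_le[OF f v(1)] .
      also have "\<dots> < rank_w X v z" using rank_w_strict[OF f yz(2) wlt[OF v(1) False yz(3)]] .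
      finally show ?thesis using v by simp
    next
      case True
      have "rank_K X C z = card X" using v True by (simp add: rank_w_def)
      moreover have "rank_K X C y \<le> rank_w X w y" using rank_K_le[OF f] w by auto
      moreover have "rank_w X w y < rank_w X w z" using w rank_w_strict[OF f yz(2) wlt[OF _ _ yz(3)]] by auto
      moreover have "rank_w X w z \<le> card X" using rank_w_le[OF f] .
      ultimately show ?thesis by simp
    qed
  qed
next
  fix A :: "real ^ 'd ^ 'd" and b z assume "invertible A"
  then show "rank_K ((\<lambda>x. A *v x + b) ` X) ((\<lambda>c. A *v c) ` C) (A *v z + b) = rank_K X C z"
    using affine_part assms(2) by blast
next
  fix D :: "(real ^ 'd) set" and z assume "closed_convex_cone D \<and> C \<subseteq> D"
  then have "dual_cone D \<subseteq> dual_cone C" by (auto simp: dual_cone_def)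
  then show "rank_K X C z \<le> rank_K X D z" using rank_K_anti assms(2) by blast
next
  fix w z assume "w \<in> dual_cone C"
  then have "dual_cone (halfspace_plus w) \<subseteq> dual_cone C"
    by (auto simp: dual_cone_def halfspace_plus_def)
  then show "rank_K X C z \<le> rank_K X (halfspace_plus w) z" using rank_K_anti assms(2) by blast
qed

end
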